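(* If $p>2$ is a prime, then $P(p,2p)=P(p,p)=pO(p)$.
   Context: $O(p)$ is the multiplicative order of $2$ modulo $p$. For positive integers $m,n$, let $\mathbf{Z}_m$ be the integers modulo $m$ and $T:\mathbf{Z}_m^n\to\mathbf{Z}_m^n$, $T(a_0,\dots,a_{n-1})=(a_0+a_1,a_1+a_2,\dots,a_{n-1}+a_0)$. For $\mathbf{a}\in\mathbf{Z}_m^n$ the cycle length of $(T^k\mathbf{a})_{k\ge0}$ is the smallest positive integer $P$ such that there is $N$ with $T^{k+P}\mathbf{a}=T^k\mathbf{a}$ for all $k\ge N$. $P(m,n)$ denotes the maximum of these cycle lengths over all $\mathbf{a}\in\mathbf{Z}_m^n$. *)

theory Defs
  imports "HOL-Number_Theory.Number_Theory"
begin

definition vecs :: "nat \<Rightarrow> nat \<Rightarrow> nat list set" where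
  "vecs m n = {xs. length xs = n \<and> (\<forall>x\<in>set xs. x < m)}"

definition Tmap :: "nat \<Rightarrow> nat \<Rightarrow> nat list \<Rightarrow> nat list" where
  "Tmap m n xs = map (\<lambda>i. (xs ! i + xs ! ((i + 1) mod n)) mod m) [0..<n]"

definition cycle_len :: "nat \<Rightarrow> nat \<Rightarrow> nat list \<Rightarrow> nat" where
  "cycle_len m n a = (LEAST P. 0 < P \<and>
     (\<exists>N. \<forall>k\<ge>N. (Tmap m n ^^ (k + P)) a = (Tmap m n ^^ k) a))"

definition Pmax :: "nat \<Rightarrow> nat \<Rightarrow> nat" where
  "Pmax m n = Max (cycle_len m n ` vecs m n)"

end

theory Submission
  imports Defs
begin

lemma len_Tmap[simp]: "length (Tmap m n xs) = n"
  by (simp add: Tmap_def)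

lemma nth_Tmap: "i < n \<Longrightarrow> Tmap m n xs ! i = (xs ! i + xs ! ((i + 1) mod n)) mod m"
  by (simp add: Tmap_def)

lemma len_Tpow[simp]: "length ((Tmap m n ^^ k) xs) = (if k = 0 then length xs else n)"
  by (induction k) auto

lemma pascal_sum:
  fixes g :: "nat \<Rightarrow> nat"
  shows "(\<Sum>j\<le>k. (k choose j) * (g j + g (Suc j))) = (\<Sum>j\<le>Suc k. (Suc k choose j) * g j)"
proof -
  have a: "(\<Sum>j\<le>k. (k choose j) * g j) = g 0 + (\<Sum>j\<le>k. (k choose Suc j) * g (Suc j))"
  proof -
    have "(\<Sum>j\<le>k. (k choose j) * g j) = (\<Sum>j\<le>Suc k. (k choose j) * g j)" by simp
    also have "\<dots> = g 0 + (\<Sum>j\<le>k. (k choose Suc j) * g (Suc j))"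
      by (subst sum.atMost_Suc_shift) simp
    finally show ?thesis .
  qed
  have b: "(\<Sum>j\<le>Suc k. (Suc k choose j) * g j) = g 0 + (\<Sum>j\<le>k. (k choose j) * g (Suc j)) + (\<Sum>j\<le>k. (k choose Suc j) * g (Suc j))"
    by (subst sum.atMost_Suc_shift) (simp add: algebra_simps sum.distrib)
  show ?thesis using a b by (simp add: algebra_simps sum.distrib)
qed

lemma Tmap_vecs: "xs \<in> vecs m n \<Longrightarrow> 0 < n \<Longrightarrow> Tmap m n xs \<in> vecs m n"
proof -
  assume a: "xs \<in> vecs m n" "0 < n"
  then have "xs ! 0 < m" by (auto simp: vecs_def)
  then have "0 < m" by simp
  then show ?thesis using a by (auto simp: vecs_def Tmap_def)
qed

lemma Tpow_vecs: "xs \<in> vecs m n \<Longrightarrow> 0 < n \<Longrightarrow> (Tmap m n ^^ k) xs \<in> vecs m n"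
  by (induction k) (auto simp: Tmap_vecs)

lemma sum_mod_inner:
  fixes c a :: "nat \<Rightarrow> nat"
  shows "(\<Sum>j\<in>A. c j * (a j mod m)) mod m = (\<Sum>j\<in>A. c j * a j) mod m"
proof -
  have "(\<Sum>j\<in>A. c j * (a j mod m)) mod m = (\<Sum>j\<in>A. (c j * (a j mod m)) mod m) mod m"
    by (simp add: mod_sum_eq)
  also have "\<dots> = (\<Sum>j\<in>A. (c j * a j) mod m) mod m"
    by (simp add: mod_mult_right_eq)
  also have "\<dots> = (\<Sum>j\<in>A. c j * a j) mod m"
    by (simp add: mod_sum_eq)
  finally show ?thesis .
qed

lemma Tpow_formula:
  assumes "xs \<in> vecs m n" "0 < n" "i < n"
  shows "(Tmap m n ^^ k) xs ! i = (\<Sum>j\<le>k. (k choose j) * xs ! ((i + j) mod n)) mod m"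
  using assms
proof (induction k arbitrary: xs)
  case 0
  then show ?case by (auto simp: vecs_def)
next
  case (Suc k)
  have "(Tmap m n ^^ Suc k) xs = (Tmap m n ^^ k) (Tmap m n xs)"
    by (simp add: funpow_Suc_right del: funpow.simps)
  also have "\<dots> ! i = (\<Sum>j\<le>k. (k choose j) * Tmap m n xs ! ((i + j) mod n)) mod m"
    using Suc by (simp add: Tmap_vecs)
  also have "\<dots> = (\<Sum>j\<le>k. (k choose j) * ((xs ! ((i + j) mod n) + xs ! ((i + Suc j) mod n)) mod m)) mod m"
    using Suc.prems by (simp add: nth_Tmap mod_Suc_eq vecs_def add.assoc)
  also have "\<dots> = (\<Sum>j\<le>k. (k choose j) * (xs ! ((i + j) mod n) + xs ! ((i + Suc j) mod n))) mod m"
    by (rule sum_mod_inner)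
  also have "\<dots> = (\<Sum>j\<le>Suc k. (Suc k choose j) * xs ! ((i + j) mod n)) mod m"
    using pascal_sum[of k "\<lambda>j. xs ! ((i + j) mod n)"] by simp
  finally show ?case .
qed


lemma Tp_formula:
  assumes p: "prime p" and xs: "xs \<in> vecs p n" and n: "0 < n" and i: "i < n"
  shows "(Tmap p n ^^ p) xs ! i = (xs ! i + xs ! ((i + p) mod n)) mod p"
proof -
  define g where "g j = xs ! ((i + j) mod n)" for j
  have p0: "p \<noteq> 0" "0 < p" using p prime_gt_0_nat by auto
  have "(Tmap p n ^^ p) xs ! i = (\<Sum>j\<le>p. (p choose j) * g j) mod p"
    using Tpow_formula[OF xs n i] by (simp add: g_def)
  also have "\<dots> = (\<Sum>j\<le>p. (p choose j) * g j mod p) mod p"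
    by (simp add: mod_sum_eq)
  also have "(\<Sum>j\<le>p. (p choose j) * g j mod p) = (\<Sum>j\<in>{0,p}. (p choose j) * g j mod p)"
  proof (rule sum.mono_neutral_right)
    show "\<forall>j\<in>{..p} - {0, p}. (p choose j) * g j mod p = 0"
    proof
      fix j assume "j \<in> {..p} - {0, p}"
      then have "j < p" "j \<noteq> 0" by auto
      then have "p dvd (p choose j)" using dvd_choose_prime p p0 by blast
      then show "(p choose j) * g j mod p = 0" by simp
    qed
  qed auto
  also have "\<dots> = g 0 mod p + g p mod p" using p0 by simp
  finally show ?thesis using i by (simp add: g_def mod_add_eq)
qed

definition symm :: "nat \<Rightarrow> nat \<Rightarrow> nat list \<Rightarrow> bool" where
  "symm p n y = (\<forall>i<n. y ! ((i + p) mod n) = y ! i)"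

lemma Tp_sym:
  assumes p: "prime p" and y: "y \<in> vecs p n" and n: "0 < n" and s: "symm p n y" and i: "i < n"
  shows "(Tmap p n ^^ p) y ! i = (2 * y ! i) mod p"
  using Tp_formula[OF p y n i] s i by (simp add: symm_def mult_2)

lemma Tp_sym_symm:
  assumes p: "prime p" and y: "y \<in> vecs p n" and n: "0 < n" and s: "symm p n y"
  shows "symm p n ((Tmap p n ^^ p) y)"
  unfolding symm_def
proof (intro allI impI)
  fix i assume i: "i < n"
  have "(i + p) mod n < n" using n by simp
  then show "(Tmap p n ^^ p) y ! ((i + p) mod n) = (Tmap p n ^^ p) y ! i"
    using Tp_sym[OF p y n s] i s by (simp add: symm_def)
qed

lemma Tpq_sym:
  assumes p: "prime p" and y: "y \<in> vecs p n" and n: "0 < n" and s: "symm p n y" and i: "i < n"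
  shows "(Tmap p n ^^ (p * q)) y ! i = (2 ^ q * y ! i) mod p"
  using y s
proof (induction q arbitrary: y)
  case 0
  then show ?case using i by (auto simp: vecs_def)
next
  case (Suc q)
  have "(Tmap p n ^^ (p * Suc q)) y = (Tmap p n ^^ (p * q)) ((Tmap p n ^^ p) y)"
  proof -
    have "p * Suc q = p * q + p" by simp
    then show ?thesis by (simp only: funpow_add comp_def)
  qed
  also have "\<dots> ! i = (2 ^ q * ((Tmap p n ^^ p) y ! i)) mod p"
    using Suc.IH[OF Tpow_vecs[OF Suc.prems(1) n] Tp_sym_symm[OF p Suc.prems(1) n Suc.prems(2)]] .
  also have "\<dots> = (2 ^ q * ((2 * y ! i) mod p)) mod p"
    using Tp_sym[OF p Suc.prems(1) n Suc.prems(2) i] by simp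
  also have "\<dots> = (2 ^ Suc q * y ! i) mod p"
    by (simp add: mod_mult_right_eq mult.assoc mult.left_commute)
  finally show ?case .
qed

lemma Tperiod_sym:
  assumes p: "prime p" and y: "y \<in> vecs p n" and n: "0 < n" and s: "symm p n y"
    and o: "[2 ^ q = 1] (mod p)"
  shows "(Tmap p n ^^ (p * q)) y = y"
proof (rule nth_equalityI)
  show "length ((Tmap p n ^^ (p * q)) y) = length y" using y by (simp add: vecs_def)
next
  fix i assume "i < length ((Tmap p n ^^ (p * q)) y)"
  then have i: "i < n" using y by (simp add: vecs_def split: if_splits)
  have p1: "1 < p" using p prime_gt_1_nat by blast
  have "2 ^ q mod p = 1" using o p1 by (simp add: cong_def)
  moreover have "y ! i < p" using y i by (auto simp: vecs_def)
  ultimately show "(Tmap p n ^^ (p * q)) y ! i = y ! i"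
    using Tpq_sym[OF p y n s i] by (metis mod_mult_left_eq mult_1 mod_less)
qed

lemma cycle_le:
  assumes "0 < P" "\<forall>k\<ge>N. (Tmap m n ^^ (k + P)) a = (Tmap m n ^^ k) a"
  shows "cycle_len m n a \<le> P"
  unfolding cycle_len_def by (rule Least_le) (use assms in blast)


lemma vecs_finite: "finite (vecs m n)"
proof -
  have "vecs m n \<subseteq> {xs. set xs \<subseteq> {0..<m} \<and> length xs = n}"
    by (auto simp: vecs_def)
  moreover have "finite {xs. set xs \<subseteq> {0..<m} \<and> length xs = n}"
    by (rule finite_lists_length_eq) simp
  ultimately show ?thesis by (rule finite_subset)
qed

lemma app_nth: "length xs = n \<Longrightarrow> i < 2 * n \<Longrightarrow> (xs @ xs) ! i = xs ! (i mod n)"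
  by (cases "i < n") (auto simp: nth_append le_mod_geq)

lemma Tmap_dup:
  assumes l: "length xs = n" and n: "0 < n"
  shows "Tmap m (2 * n) (xs @ xs) = Tmap m n xs @ Tmap m n xs"
proof (rule nth_equalityI)
  show "length (Tmap m (2 * n) (xs @ xs)) = length (Tmap m n xs @ Tmap m n xs)" by simp
next
  fix i assume "i < length (Tmap m (2 * n) (xs @ xs))"
  then have i: "i < 2 * n" by simp
  have "(i + 1) mod (2 * n) < 2 * n" using n by simp
  then have "(xs @ xs) ! ((i + 1) mod (2 * n)) = xs ! ((i + 1) mod (2 * n) mod n)"
    using app_nth[OF l] by blast
  also have "(i + 1) mod (2 * n) mod n = (i + 1) mod n"
    by (simp add: mod_mod_cancel)
  finally have e: "(xs @ xs) ! ((i + 1) mod (2 * n)) = xs ! ((i + 1) mod n)" .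
  have "(Tmap m n xs @ Tmap m n xs) ! i = Tmap m n xs ! (i mod n)"
    using app_nth[of "Tmap m n xs" n i] i by simp
  also have "\<dots> = (xs ! (i mod n) + xs ! ((i mod n + 1) mod n)) mod m"
    using n by (simp add: nth_Tmap)
  also have "(i mod n + 1) mod n = (i + 1) mod n" by (metis mod_add_left_eq)
  finally show "Tmap m (2 * n) (xs @ xs) ! i = (Tmap m n xs @ Tmap m n xs) ! i"
    using i e app_nth[OF l i] by (simp add: nth_Tmap)
qed

lemma Tpow_dup:
  assumes l: "length xs = n" and n: "0 < n"
  shows "(Tmap m (2 * n) ^^ k) (xs @ xs) = (Tmap m n ^^ k) xs @ (Tmap m n ^^ k) xs"
proof (induction k)
  case 0 then show ?case by simp
next
  case (Suc k)
  have "length ((Tmap m n ^^ k) xs) = n" using l by simp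
  then show ?case using Suc Tmap_dup[OF _ n] by simp
qed

definition e0 :: "nat \<Rightarrow> nat list" where
  "e0 p = map (\<lambda>i. if i = 0 then 1 else 0) [0..<p]"

lemma e0_nth: "i < p \<Longrightarrow> e0 p ! i = (if i = 0 then 1 else 0)"
  by (simp add: e0_def)

lemma e0_vecs: "1 < p \<Longrightarrow> e0 p \<in> vecs p p"
  by (auto simp: e0_def vecs_def)

lemma Tr_e0:
  assumes p1: "1 < p" and r: "0 < r" "r < p"
  shows "(Tmap p p ^^ r) (e0 p) ! (p - r) = 1"
proof -
  have "(Tmap p p ^^ r) (e0 p) ! (p - r) = (\<Sum>j\<le>r. (r choose j) * e0 p ! ((p - r + j) mod p)) mod p"
    using Tpow_formula[OF e0_vecs[OF p1]] r by simp
  also have "(\<Sum>j\<le>r. (r choose j) * e0 p ! ((p - r + j) mod p)) = (\<Sum>j\<le>r. if j = r then 1 else 0)"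
  proof (rule sum.cong)
    fix j assume "j \<in> {..r}"
    then have j: "j \<le> r" by simp
    show "(r choose j) * e0 p ! ((p - r + j) mod p) = (if j = r then 1 else 0)"
    proof (cases "j = r")
      case True
      then show ?thesis using r by (simp add: e0_nth)
    next
      case False
      then have "p - r + j < p" "p - r + j \<noteq> 0" using j r by auto
      then show ?thesis using False by (simp add: e0_nth)
    qed
  qed simp
  also have "\<dots> = 1" by simp
  finally show ?thesis using p1 by simp
qed


lemma symm_p: "symm p p y"
  by (simp add: symm_def)

lemma ord_facts:
  fixes p :: nat
  assumes p: "prime p" and p2: "p > 2"
  shows "[2 ^ ord p 2 = 1] (mod p)" "0 < ord p 2"
proof -
  have "coprime p 2"
  proof (rule prime_imp_coprime[OF p])
    show "\<not> p dvd 2" using p2 by (auto dest: dvd_imp_le)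
  qed
  then show "0 < ord p 2" by simp
  show "[2 ^ ord p 2 = 1] (mod p)" using ord_works by blast
qed

lemma e0_dvd:
  assumes p: "prime p" and p2: "p > 2" and P: "0 < P"
    and h: "\<forall>k\<ge>N. (Tmap p p ^^ (k + P)) (e0 p) = (Tmap p p ^^ k) (e0 p)"
  shows "p * ord p 2 dvd P"
proof -
  define od where "od = ord p 2"
  define Q where "Q = p * od"
  have p1: "1 < p" using p2 by simp
  have oc: "[2 ^ od = 1] (mod p)" "0 < od" using ord_facts[OF p p2] by (auto simp: od_def)
  have Q1: "1 \<le> Q" using oc p1 by (simp add: Q_def)
  have ev: "e0 p \<in> vecs p p" using e0_vecs[OF p1] .
  have per: "(Tmap p p ^^ Q) y = y" if "y \<in> vecs p p" for y
    using Tperiod_sym[OF p that _ symm_p oc(1)] p1 by (simp add: Q_def)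
  have perc: "(Tmap p p ^^ (c * Q)) (e0 p) = e0 p" for c
  proof (induction c)
    case 0 then show ?case by simp
  next
    case (Suc c)
    have "(Tmap p p ^^ (Suc c * Q)) (e0 p) = (Tmap p p ^^ Q) ((Tmap p p ^^ (c * Q)) (e0 p))"
      by (simp add: funpow_add)
    then show ?case using Suc per[OF ev] by simp
  qed
  have "N \<le> N * Q" using Q1 by simp
  then have "(Tmap p p ^^ (N * Q + P)) (e0 p) = (Tmap p p ^^ (N * Q)) (e0 p)" using h by blast
  moreover have "(Tmap p p ^^ (N * Q + P)) (e0 p) = (Tmap p p ^^ P) ((Tmap p p ^^ (N * Q)) (e0 p))"
    by (simp only: add.commute[of "N * Q"] funpow_add comp_def)
  ultimately have fix0: "(Tmap p p ^^ P) (e0 p) = e0 p" using perc by simp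
  define q where "q = P div p"
  define r where "r = P mod p"
  have Pqr: "P = p * q + r" by (simp add: q_def r_def)
  have rp: "r < p" using p1 by (simp add: r_def)
  define y where "y = (Tmap p p ^^ r) (e0 p)"
  have yv: "y \<in> vecs p p" using Tpow_vecs[OF ev] p1 by (simp add: y_def)
  have TP: "(Tmap p p ^^ P) (e0 p) = (Tmap p p ^^ (p * q)) y"
    by (simp only: Pqr y_def funpow_add comp_def)
  have r0: "r = 0"
  proof (rule ccontr)
    assume "r \<noteq> 0"
    then have r: "0 < r" by simp
    have i: "p - r < p" using r rp by simp
    have "(Tmap p p ^^ (p * q)) y ! (p - r) = (2 ^ q * y ! (p - r)) mod p"
      using Tpq_sym[OF p yv _ symm_p i] p1 by simp
    also have "y ! (p - r) = 1" using Tr_e0[OF p1 r rp] by (simp add: y_def)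
    finally have "(Tmap p p ^^ P) (e0 p) ! (p - r) = 2 ^ q mod p" using TP by simp
    moreover have "e0 p ! (p - r) = 0" using i r rp by (simp add: e0_nth)
    ultimately have "p dvd 2 ^ q" using fix0 by (simp add: mod_eq_0_iff_dvd)
    then have "p dvd 2" using p prime_dvd_power by blast
    then show False using p2 by (auto dest: dvd_imp_le)
  qed
  then have "y = e0 p" by (simp add: y_def)
  then have "(Tmap p p ^^ (p * q)) (e0 p) ! 0 = (2 ^ q * 1) mod p"
    using Tpq_sym[OF p ev _ symm_p, of 0 q] p1 by (simp add: e0_nth)
  then have "2 ^ q mod p = 1" using fix0 TP \<open>y = e0 p\<close> p1 by (simp add: e0_nth)
  then have "[2 ^ q = 1] (mod p)" using p1 by (simp add: cong_def)
  then have "od dvd q" unfolding od_def using ord_divides by blast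
  then show ?thesis using Pqr r0 by (simp add: od_def)
qed


lemma symm_2p:
  assumes p: "prime p" and a: "a \<in> vecs p (2 * p)"
  shows "symm p (2 * p) ((Tmap p (2 * p) ^^ p) a)"
  unfolding symm_def
proof (intro allI impI)
  fix i assume i: "i < 2 * p"
  have p0: "0 < p" using p prime_gt_0_nat by blast
  have n: "0 < 2 * p" using p0 by simp
  have j: "(i + p) mod (2 * p) < 2 * p" using p0 by simp
  have "((i + p) mod (2 * p) + p) mod (2 * p) = (i + 2 * p) mod (2 * p)"
    by (metis mod_add_left_eq add.assoc mult_2)
  also have "\<dots> = i" using i by simp
  finally have e: "((i + p) mod (2 * p) + p) mod (2 * p) = i" .
  show "(Tmap p (2 * p) ^^ p) a ! ((i + p) mod (2 * p)) = (Tmap p (2 * p) ^^ p) a ! i"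
    using Tp_formula[OF p a n j] Tp_formula[OF p a n i] e by (simp add: add.commute)
qed

theorem proposition7p2:
  fixes p :: nat
  assumes "prime p" and "p > 2"
  shows "Pmax p (2 * p) = Pmax p p \<and> Pmax p p = p * ord p 2"
proof -
  note p = assms(1) and p2 = assms(2)
  define Q where "Q = p * ord p 2"
  have p1: "1 < p" using p2 by simp
  have oc: "[2 ^ ord p 2 = 1] (mod p)" "0 < ord p 2" using ord_facts[OF p p2] by auto
  have Q0: "0 < Q" using oc p1 by (simp add: Q_def)
  have per: "(Tmap p n ^^ Q) y = y" if "y \<in> vecs p n" "0 < n" "symm p n y" for y n
    using Tperiod_sym[OF p that oc(1)] by (simp add: Q_def)
  have ev: "e0 p \<in> vecs p p" using e0_vecs[OF p1] .
  have ev2: "e0 p @ e0 p \<in> vecs p (2 * p)" using ev by (auto simp: vecs_def)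
  have A: "Pmax p p = Q"
    unfolding Pmax_def
  proof (rule Max_eqI)
    show "finite (cycle_len p p ` vecs p p)" using vecs_finite by simp
  next
    fix c assume "c \<in> cycle_len p p ` vecs p p"
    then obtain a where a: "a \<in> vecs p p" and c: "c = cycle_len p p a" by blast
    have "\<forall>k\<ge>0. (Tmap p p ^^ (k + Q)) a = (Tmap p p ^^ k) a"
      using per[OF a _ symm_p] p1 by (simp add: funpow_add)
    then show "c \<le> Q" using cycle_le[OF Q0] c by blast
  next
    have "cycle_len p p (e0 p) = Q"
      unfolding cycle_len_def
    proof (rule Least_equality)
      show "0 < Q \<and> (\<exists>N. \<forall>k\<ge>N. (Tmap p p ^^ (k + Q)) (e0 p) = (Tmap p p ^^ k) (e0 p))"
        using per[OF ev _ symm_p] p1 Q0 by (simp add: funpow_add)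
    next
      fix P assume "0 < P \<and> (\<exists>N. \<forall>k\<ge>N. (Tmap p p ^^ (k + P)) (e0 p) = (Tmap p p ^^ k) (e0 p))"
      then obtain N where "0 < P" "\<forall>k\<ge>N. (Tmap p p ^^ (k + P)) (e0 p) = (Tmap p p ^^ k) (e0 p)"
        by blast
      then have "Q dvd P" using e0_dvd[OF p p2] by (simp add: Q_def)
      then show "Q \<le> P" using \<open>0 < P\<close> by (simp add: dvd_imp_le)
    qed
    then show "Q \<in> cycle_len p p ` vecs p p" using ev by force
  qed
  have B: "Pmax p (2 * p) = Q"
    unfolding Pmax_def
  proof (rule Max_eqI)
    show "finite (cycle_len p (2 * p) ` vecs p (2 * p))" using vecs_finite by simp
  next
    fix c assume "c \<in> cycle_len p (2 * p) ` vecs p (2 * p)"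
    then obtain a where a: "a \<in> vecs p (2 * p)" and c: "c = cycle_len p (2 * p) a" by blast
    have n: "0 < 2 * p" using p1 by simp
    define y where "y = (Tmap p (2 * p) ^^ p) a"
    have yp: "(Tmap p (2 * p) ^^ Q) y = y"
      using per[OF Tpow_vecs[OF a n] n symm_2p[OF p a]] by (simp add: y_def)
    have "\<forall>k\<ge>p. (Tmap p (2 * p) ^^ (k + Q)) a = (Tmap p (2 * p) ^^ k) a"
    proof (intro allI impI)
      fix k assume k: "p \<le> k"
      have "(Tmap p (2 * p) ^^ (k + Q)) a = (Tmap p (2 * p) ^^ ((k - p) + Q + p)) a"
        using k by simp
      also have "\<dots> = (Tmap p (2 * p) ^^ (k - p)) ((Tmap p (2 * p) ^^ Q) y)"
        by (simp only: funpow_add comp_def y_def)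
      also have "\<dots> = (Tmap p (2 * p) ^^ ((k - p) + p)) a"
        using yp by (simp only: funpow_add comp_def y_def)
      also have "\<dots> = (Tmap p (2 * p) ^^ k) a" using k by simp
      finally show "(Tmap p (2 * p) ^^ (k + Q)) a = (Tmap p (2 * p) ^^ k) a" .
    qed
    then show "c \<le> Q" using cycle_le[OF Q0] c by blast
  next
    have l: "length (e0 p) = p" "0 < p" using p1 by (auto simp: e0_def)
    have "cycle_len p (2 * p) (e0 p @ e0 p) = Q"
      unfolding cycle_len_def
    proof (rule Least_equality)
      have "\<forall>k\<ge>0. (Tmap p p ^^ (k + Q)) (e0 p) = (Tmap p p ^^ k) (e0 p)"
        using per[OF ev _ symm_p] p1 by (simp add: funpow_add)
      then show "0 < Q \<and> (\<exists>N. \<forall>k\<ge>N. (Tmap p (2 * p) ^^ (k + Q)) (e0 p @ e0 p) =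
          (Tmap p (2 * p) ^^ k) (e0 p @ e0 p))"
        using Q0 Tpow_dup[OF l] by auto
    next
      fix P assume "0 < P \<and> (\<exists>N. \<forall>k\<ge>N. (Tmap p (2 * p) ^^ (k + P)) (e0 p @ e0 p) =
          (Tmap p (2 * p) ^^ k) (e0 p @ e0 p))"
      then obtain N where P0: "0 < P" and
        h: "\<forall>k\<ge>N. (Tmap p (2 * p) ^^ (k + P)) (e0 p @ e0 p) = (Tmap p (2 * p) ^^ k) (e0 p @ e0 p)"
        by blast
      have "\<forall>k\<ge>N. (Tmap p p ^^ (k + P)) (e0 p) = (Tmap p p ^^ k) (e0 p)"
      proof (intro allI impI)
        fix k assume "N \<le> k"
        then have "(Tmap p p ^^ (k + P)) (e0 p) @ (Tmap p p ^^ (k + P)) (e0 p) =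
            (Tmap p p ^^ k) (e0 p) @ (Tmap p p ^^ k) (e0 p)"
          using h Tpow_dup[OF l] by metis
        moreover have "length ((Tmap p p ^^ (k + P)) (e0 p)) = length ((Tmap p p ^^ k) (e0 p))"
          using l by simp
        ultimately show "(Tmap p p ^^ (k + P)) (e0 p) = (Tmap p p ^^ k) (e0 p)" by simp
      qed
      then have "Q dvd P" using e0_dvd[OF p p2 P0] by (simp add: Q_def)
      then show "Q \<le> P" using P0 by (simp add: dvd_imp_le)
    qed
    then show "Q \<in> cycle_len p (2 * p) ` vecs p (2 * p)" using ev2 by force
  qed
  show ?thesis using A B by (simp add: Q_def)
qed

end
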